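(* Let $d\in\mathbb{N}$ and, for $(a,b)\in\mathbb{R}^2$, let $H_{(a,b,d)}$ denote the polynomial system $h_1(x,y)=x^{2d}+ay^d-y=0$, $h_2(x,y)=y^{2d}+bx^d-x=0$. Let $E_d\subseteq\mathbb{R}^2$ be the set of all $(a,b)$ such that $H_{(a,b,d)}$ has at least $5$ non-degenerate isolated roots in the open positive quadrant $\mathbb{R}^2_+=\{(x,y): x>0,\ y>0\}$. Then $E_d$ is an open subset of $\mathbb{R}^2$ and is symmetric about the line $\{a=b\}$ (i.e. $(a,b)\in E_d$ if and only if $(b,a)\in E_d$).
   Context: A root $z$ of a polynomial system $F=(f_1,f_2)$ in two variables is non-degenerate if the Jacobian matrix of $F$ at $z$ is invertible. *)

theory Defs
  imports "HOL-Analysis.Analysis"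
begin

definition H_sys :: "real \<Rightarrow> real \<Rightarrow> nat \<Rightarrow> real \<times> real \<Rightarrow> real \<times> real" where
  "H_sys a b d = (\<lambda>(x, y). (x ^ (2 * d) + a * y ^ d - y, y ^ (2 * d) + b * x ^ d - x))"

definition nondegenerate_root :: "(real \<times> real \<Rightarrow> real \<times> real) \<Rightarrow> real \<times> real \<Rightarrow> bool" where
  "nondegenerate_root F z \<longleftrightarrow> F z = 0 \<and> (\<exists>F'. (F has_derivative F') (at z) \<and> bij F')"

definition isolated_root :: "(real \<times> real \<Rightarrow> real \<times> real) \<Rightarrow> real \<times> real \<Rightarrow> bool" where
  "isolated_root F z \<longleftrightarrow> F z = 0 \<and> (\<exists>e>0. \<forall>w. w \<noteq> z \<and> dist w z < e \<longrightarrow> F w \<noteq> 0)"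

definition pos_quadrant :: "(real \<times> real) set" where
  "pos_quadrant = {(x, y). x > 0 \<and> y > 0}"

definition E_set :: "nat \<Rightarrow> (real \<times> real) set" where
  "E_set d = {(a, b). \<exists>S. finite S \<and> card S \<ge> 5 \<and> S \<subseteq> pos_quadrant \<and>
      (\<forall>z\<in>S. nondegenerate_root (H_sys a b d) z \<and> isolated_root (H_sys a b d) z)}"

end

theory Submission
  imports Defs
begin

definition Jm :: "nat \<Rightarrow> real \<Rightarrow> real \<Rightarrow> real \<Rightarrow> real \<Rightarrow> real \<times> real \<Rightarrow> real \<times> real" where
  "Jm d a b x y = (\<lambda>v. (of_nat (2*d) * x^(2*d-1) * fst v + (a * of_nat d * y^(d-1) - 1) * snd v,
                        (b * of_nat d * x^(d-1) - 1) * fst v + of_nat (2*d) * y^(2*d-1) * snd v))"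

definition Dt :: "nat \<Rightarrow> real \<Rightarrow> real \<Rightarrow> real \<Rightarrow> real \<Rightarrow> real" where
  "Dt d a b x y = (of_nat (2*d) * x^(2*d-1)) * (of_nat (2*d) * y^(2*d-1))
     - (a * of_nat d * y^(d-1) - 1) * (b * of_nat d * x^(d-1) - 1)"

lemma H_eq: "H_sys a b d = (\<lambda>v. (fst v ^(2*d) + a * snd v ^ d - snd v, snd v ^ (2*d) + b * fst v ^ d - fst v))"
  by (auto simp: H_sys_def fun_eq_iff)

lemma H_der: "(H_sys a b d has_derivative Jm d a b x y) (at (x,y))"
  unfolding H_eq Jm_def
  apply (rule has_derivative_eq_rhs)
   apply (rule derivative_eq_intros | simp)+
  apply (auto simp: fun_eq_iff algebra_simps)
  done

lemma Jm_bij: "bij (Jm d a b x y) \<longleftrightarrow> Dt d a b x y \<noteq> 0"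
proof -
  define c1 where "c1 = of_nat (2*d) * x^(2*d-1)"
  define c2 where "c2 = a * of_nat d * y^(d-1) - (1::real)"
  define c3 where "c3 = b * of_nat d * x^(d-1) - (1::real)"
  define c4 where "c4 = of_nat (2*d) * y^(2*d-1)"
  have J: "Jm d a b x y = (\<lambda>v. (c1 * fst v + c2 * snd v, c3 * fst v + c4 * snd v))"
    by (simp add: Jm_def c1_def c2_def c3_def c4_def)
  have D: "Dt d a b x y = c1 * c4 - c2 * c3" by (simp add: Dt_def c1_def c2_def c3_def c4_def)
  show ?thesis
  proof
    assume b: "bij (Jm d a b x y)"
    show "Dt d a b x y \<noteq> 0"
    proof
      assume "Dt d a b x y = 0"
      hence z: "c1 * c4 - c2 * c3 = 0" using D by simp
      have "\<exists>v. v \<noteq> 0 \<and> Jm d a b x y v = 0"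
      proof (cases "c1 = 0 \<and> c2 = 0")
        case True
        show ?thesis
        proof (cases "c3 = 0 \<and> c4 = 0")
          case True
          then show ?thesis using \<open>c1 = 0 \<and> c2 = 0\<close> by (intro exI[of _ "(1,0)"]) (simp add: J zero_prod_def)
        next
          case False
          then show ?thesis using True z by (intro exI[of _ "(c4,-c3)"]) (auto simp: J algebra_simps zero_prod_def)
        qed
      next
        case False
        then show ?thesis using z by (intro exI[of _ "(c2,-c1)"]) (auto simp: J algebra_simps zero_prod_def)
      qed
      then obtain v where "v \<noteq> 0" "Jm d a b x y v = 0" by blast
      moreover have "Jm d a b x y 0 = 0" by (simp add: J zero_prod_def)
      ultimately show False using b by (metis bij_def injD)
    qed
  next
    assume "Dt d a b x y \<noteq> 0"
    hence n: "c1 * c4 - c2 * c3 \<noteq> 0" using D by simp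
    define g where "g = (\<lambda>v::real\<times>real. ((c4 * fst v - c2 * snd v)/(c1*c4-c2*c3), (c1 * snd v - c3 * fst v)/(c1*c4-c2*c3)))"
    have 1: "\<And>v. g (Jm d a b x y v) = v" using n
      by (auto simp: J g_def field_simps prod_eq_iff; auto simp: algebra_simps)
    have 2: "Jm d a b x y (g v) = v" for v
    proof -
      obtain p q where v: "v = (p,q)" by fastforce
      have e1: "c1*((c4*p - c2*q)/(c1*c4-c2*c3)) + c2*((c1*q - c3*p)/(c1*c4-c2*c3)) = p"
        using n by (simp add: divide_simps) (simp add: algebra_simps)
      have e2: "c3*((c4*p - c2*q)/(c1*c4-c2*c3)) + c4*((c1*q - c3*p)/(c1*c4-c2*c3)) = q"
        using n by (simp add: divide_simps) (simp add: algebra_simps)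
      show ?thesis using e1 e2 by (simp add: J g_def v)
    qed
    show "bij (Jm d a b x y)" using 1 2 by (metis bijI' )
  qed
qed


lemma deriv_isolated:
  fixes F :: "'a::euclidean_space \<Rightarrow> 'b::euclidean_space"
  assumes der: "(F has_derivative F') (at z)" and inj: "inj F'"
  shows "\<exists>e>0. \<forall>w. w \<noteq> z \<and> dist w z < e \<longrightarrow> F w \<noteq> F z"
proof -
  have bl: "bounded_linear F'" using has_derivative_bounded_linear[OF der] .
  then have lF: "linear F'" by (rule bounded_linear.linear)
  then obtain g where gl: "linear g" and gi: "g \<circ> F' = id"
    using real_vector.linear_injective_left_inverse[OF lF inj] by blast
  have blg: "bounded_linear g" using gl by (simp add: linear_conv_bounded_linear)
  then obtain K where K: "K > 0" "\<And>u. norm (g u) \<le> norm u * K"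
    using bounded_linear.pos_bounded[OF blg] by blast
  have gF: "\<And>v. g (F' v) = v" using gi by (simp add: fun_eq_iff)
  have lb: "norm v \<le> norm (F' v) * K" for v
  proof -
    have "norm v = norm (g (F' v))" by (simp add: gF)
    also have "\<dots> \<le> norm (F' v) * K" by (rule K(2))
    finally show ?thesis .
  qed
  obtain d where d: "d > 0" "\<And>y. norm (y - z) < d \<Longrightarrow> norm (F y - F z - F' (y - z)) \<le> (1/(2*K)) * norm (y - z)"
  proof -
    have all: "\<forall>e>0. \<exists>d>0. \<forall>y. norm (y - z) < d \<longrightarrow> norm (F y - F z - F' (y - z)) \<le> e * norm (y - z)"
      using der unfolding has_derivative_at_alt by blast
    have "1/(2*K) > 0" using K(1) by simp
    from all[rule_format, OF this] show ?thesis using that by blast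
  qed
  show ?thesis
  proof (intro exI[of _ d] conjI allI impI)
    show "d > 0" by fact
    fix w assume w: "w \<noteq> z \<and> dist w z < d"
    show "F w \<noteq> F z"
    proof
      assume eq: "F w = F z"
      have "norm (F' (w - z)) \<le> (1/(2*K)) * norm (w - z)"
        using d(2)[of w] w eq by (simp add: dist_norm norm_minus_commute)
      then have "norm (F' (w - z)) * K \<le> norm (w - z) / 2" using K(1)
        by (simp add: field_simps)
      with lb[of "w - z"] have "norm (w - z) \<le> norm (w - z) / 2" by linarith
      moreover have "norm (w - z) > 0" using w by simp
      ultimately show False by linarith
    qed
  qed
qed

lemma nondeg_iff:
  "nondegenerate_root (H_sys a b d) (x,y) \<longleftrightarrow> H_sys a b d (x,y) = 0 \<and> Dt d a b x y \<noteq> 0"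
proof -
  have "(\<exists>F'. (H_sys a b d has_derivative F') (at (x,y)) \<and> bij F') \<longleftrightarrow> bij (Jm d a b x y)"
  proof
    assume "\<exists>F'. (H_sys a b d has_derivative F') (at (x,y)) \<and> bij F'"
    then obtain F' where "(H_sys a b d has_derivative F') (at (x,y))" "bij F'" by blast
    moreover have "F' = Jm d a b x y" using has_derivative_unique[OF calculation(1) H_der] .
    ultimately show "bij (Jm d a b x y)" by simp
  next
    assume "bij (Jm d a b x y)"
    then show "\<exists>F'. (H_sys a b d has_derivative F') (at (x,y)) \<and> bij F'" using H_der by blast
  qed
  then show ?thesis unfolding nondegenerate_root_def using Jm_bij by simp
qed

lemma nondeg_isolated:
  assumes "nondegenerate_root (H_sys a b d) z"
  shows "isolated_root (H_sys a b d) z"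
proof -
  obtain F' where "(H_sys a b d has_derivative F') (at z)" "bij F'" "H_sys a b d z = 0"
    using assms unfolding nondegenerate_root_def by blast
  then show ?thesis unfolding isolated_root_def
    using deriv_isolated[of "H_sys a b d" F' z] bij_is_inj by metis
qed

definition Pgood :: "nat \<Rightarrow> real \<Rightarrow> real \<Rightarrow> (real \<times> real) set \<Rightarrow> bool" where
  "Pgood d a b S \<longleftrightarrow> finite S \<and> card S \<ge> 5 \<and> S \<subseteq> pos_quadrant \<and>
     (\<forall>z\<in>S. H_sys a b d z = 0 \<and> Dt d a b (fst z) (snd z) \<noteq> 0)"

lemma E_iff: "(a,b) \<in> E_set d \<longleftrightarrow> (\<exists>S. Pgood d a b S)"
proof -
  have "nondegenerate_root (H_sys a b d) z \<and> isolated_root (H_sys a b d) z \<longleftrightarrow>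
        H_sys a b d z = 0 \<and> Dt d a b (fst z) (snd z) \<noteq> 0" for z
    using nondeg_isolated[of a b d z] nondeg_iff[of a b d "fst z" "snd z"] by auto
  then show ?thesis unfolding E_set_def Pgood_def by auto
qed

lemma sym_one:
  assumes "(a,b) \<in> E_set d" shows "(b,a) \<in> E_set d"
proof -
  obtain S where S: "Pgood d a b S" using assms E_iff by blast
  have "Pgood d b a (prod.swap ` S)"
  proof -
    have c: "card (prod.swap ` S) = card S" by (simp add: card_image)
    have q: "prod.swap ` S \<subseteq> pos_quadrant" using S by (auto simp: Pgood_def pos_quadrant_def)
    have h: "\<forall>z\<in>prod.swap ` S. H_sys b a d z = 0 \<and> Dt d b a (fst z) (snd z) \<noteq> 0"
    proof
      fix z assume "z \<in> prod.swap ` S"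
      then obtain x y where xy: "(x,y) \<in> S" "z = (y,x)" by auto
      have "H_sys a b d (x,y) = 0" "Dt d a b x y \<noteq> 0" using S xy(1) by (auto simp: Pgood_def)
      then show "H_sys b a d z = 0 \<and> Dt d b a (fst z) (snd z) \<noteq> 0"
        using xy(2) by (auto simp: H_sys_def Dt_def zero_prod_def mult.commute)
    qed
    show ?thesis using S c q h by (simp add: Pgood_def)
  qed
  then show ?thesis using E_iff by blast
qed


lemma dist_Pair_same: "dist (u, c) (v, c) = dist u v"
  by (simp add: dist_Pair_Pair)

lemma local_persist:
  assumes h0: "H_sys a b d (x,y) = 0" and dt: "Dt d a b x y \<noteq> 0" and e: "e > 0"
  shows "\<exists>\<delta>>0. \<forall>a' b'. dist (a',b') (a,b) < \<delta> \<longrightarrow>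
           (\<exists>w. dist w (x,y) < e \<and> H_sys a' b' d w = 0 \<and> Dt d a' b' (fst w) (snd w) \<noteq> 0)"
proof -
  define G where "G = (\<lambda>q::(real\<times>real)\<times>(real\<times>real). (fst q,
     (fst (snd q)^(2*d) + fst (fst q) * snd (snd q)^d - snd (snd q),
      snd (snd q)^(2*d) + snd (fst q) * fst (snd q)^d - fst (snd q))))"
  have GH: "G q = (fst q, H_sys (fst (fst q)) (snd (fst q)) d (snd q))" for q
    by (simp add: G_def H_eq)
  define q0 where "q0 = ((a,b),(x,y))"
  define DD where "DD = (\<lambda>q::(real\<times>real)\<times>(real\<times>real). Dt d (fst (fst q)) (snd (fst q)) (fst (snd q)) (snd (snd q)))"
  have "open {q. DD q \<noteq> 0}" unfolding DD_def Dt_def by (intro open_Collect_neq continuous_intros)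
  moreover have "q0 \<in> {q. DD q \<noteq> 0}" using dt by (simp add: DD_def q0_def)
  ultimately obtain e1 where e1: "e1 > 0" "ball q0 e1 \<subseteq> {q. DD q \<noteq> 0}"
    using open_contains_ball by blast
  define T where "T = ball q0 (min e e1)"
  define G' where "G' = (\<lambda>v::(real\<times>real)\<times>(real\<times>real). (fst v, (fst (fst v) * y^d, snd (fst v) * x^d) + Jm d a b x y (snd v)))"
  have Gder: "(G has_derivative G') (at q0)"
    unfolding G_def G'_def q0_def Jm_def
    apply (rule has_derivative_eq_rhs)
     apply (rule derivative_eq_intros | simp)+
    apply (auto simp: fun_eq_iff algebra_simps)
    done
  have bJ: "bij (Jm d a b x y)" using dt Jm_bij by blast
  define Ji where "Ji = inv (Jm d a b x y)"
  have lJ: "linear (Jm d a b x y)"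
    using has_derivative_bounded_linear[OF H_der] bounded_linear.linear by blast
  have lJi: "linear Ji" unfolding Ji_def
    using eucl.inj_linear_imp_inv_linear[OF lJ bij_is_inj[OF bJ]] .
  have JJi: "Jm d a b x y (Ji v) = v" for v
    unfolding Ji_def using bJ by (simp add: bij_is_surj surj_f_inv_f)
  define P where "P = (\<lambda>v::(real\<times>real)\<times>(real\<times>real). snd v - (fst (fst v) * y^d, snd (fst v) * x^d))"
  have lP: "linear P"
    by (rule linearI) (auto simp: P_def algebra_simps prod_eq_iff)
  define g' where "g' = (\<lambda>v. (fst v, Ji (P v)))"
  have lg: "linear g'"
  proof (rule linearI)
    fix u v :: "(real\<times>real)\<times>(real\<times>real)" and c :: real
    show "g' (u + v) = g' u + g' v"
      by (simp add: g'_def linear_add[OF lP] linear_add[OF lJi])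
    show "g' (c *\<^sub>R u) = c *\<^sub>R g' u"
      by (simp add: g'_def linear_scale[OF lP] linear_scale[OF lJi])
  qed
  have blg: "bounded_linear g'" using lg by (simp add: linear_conv_bounded_linear)
  have GG: "G' \<circ> g' = id"
    by (auto simp: fun_eq_iff G'_def g'_def JJi P_def)
  have contG: "continuous_on UNIV G" unfolding G_def by (intro continuous_intros)
  have "G q0 \<in> interior (G ` T)"
    by (rule sussmann_open_mapping[OF open_UNIV contG _ Gder blg GG]) (auto simp: T_def e1 e)
  then obtain \<delta> where dl: "\<delta> > 0" "ball (G q0) \<delta> \<subseteq> G ` T"
    using mem_interior by blast
  have Gq0: "G q0 = ((a,b), 0)" using h0 by (simp add: GH q0_def)
  show ?thesis
  proof (intro exI[of _ \<delta>] conjI allI impI)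
    show "\<delta> > 0" by fact
    fix a' b' assume ab: "dist (a',b') (a,b) < \<delta>"
    have "dist (G q0) ((a',b'), (0::real\<times>real)) = dist (a,b) (a',b')"
      unfolding Gq0 by (rule dist_Pair_same)
    then have "((a',b'), (0::real\<times>real)) \<in> ball (G q0) \<delta>"
      using ab unfolding mem_ball by (simp only: dist_commute)
    then have "((a',b'), (0::real\<times>real)) \<in> G ` T" using dl(2) by blast
    then obtain q where q1: "q \<in> T" and q2: "((a',b'), (0::real\<times>real)) = G q" by (rule imageE)
    have fq: "fst q = (a',b')" using arg_cong[OF q2, of fst] by (simp add: G_def)
    have "snd (G q) = H_sys (fst (fst q)) (snd (fst q)) d (snd q)" by (simp only: GH snd_conv)
    then have hq: "H_sys a' b' d (snd q) = 0" using arg_cong[OF q2, of snd] fq by simp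
    have "dist q0 q < min e e1" using q1 unfolding T_def mem_ball .
    then have dq: "dist q q0 < min e e1" by (simp only: dist_commute)
    have "dist (snd q) (x,y) \<le> dist q q0" using dist_snd_le[of q q0] by (simp add: q0_def)
    then have d1: "dist (snd q) (x,y) < e" using dq by linarith
    have "q \<in> ball q0 e1" using dq by (simp add: dist_commute)
    then have "DD q \<noteq> 0" using e1(2) by blast
    then have "Dt d a' b' (fst (snd q)) (snd (snd q)) \<noteq> 0" using fq by (simp add: DD_def)
    then show "\<exists>w. dist w (x,y) < e \<and> H_sys a' b' d w = 0 \<and> Dt d a' b' (fst w) (snd w) \<noteq> 0"
      using d1 hq by blast
  qed
qed


lemma open_quadrant: "open pos_quadrant"
proof -
  have "pos_quadrant = {z. 0 < fst z} \<inter> {z::real\<times>real. 0 < snd z}"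
    by (auto simp: pos_quadrant_def)
  moreover have "open {z::real\<times>real. 0 < fst z}"
    by (intro open_Collect_less continuous_intros)
  moreover have "open {z::real\<times>real. 0 < snd z}"
    by (intro open_Collect_less continuous_intros)
  ultimately show ?thesis by (metis open_Int)
qed

lemma E_open: "open (E_set d)"
  unfolding open_contains_ball
proof
  fix p assume "p \<in> E_set d"
  obtain a b where pab: "p = (a,b)" by fastforce
  obtain S where S: "Pgood d a b S" using \<open>p \<in> E_set d\<close> pab E_iff by blast
  have fin: "finite S" and c5: "card S \<ge> 5" and Sq: "S \<subseteq> pos_quadrant"
    and Sr: "\<And>z. z \<in> S \<Longrightarrow> H_sys a b d z = 0 \<and> Dt d a b (fst z) (snd z) \<noteq> 0"
    using S by (auto simp: Pgood_def)
  have Sne: "S \<noteq> {}" using c5 by auto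
  have "\<forall>z\<in>S. \<exists>r. r > 0 \<and> (\<forall>u\<in>S. u \<noteq> z \<longrightarrow> r \<le> dist z u)"
    using finite_set_avoid[OF fin] by blast
  then obtain r where r: "\<And>z. z \<in> S \<Longrightarrow> r z > 0 \<and> (\<forall>u\<in>S. u \<noteq> z \<longrightarrow> r z \<le> dist z u)"
    using bchoice[of S] by metis
  define m where "m = Min (r ` S)"
  have m0: "m > 0" unfolding m_def using fin Sne r by (subst Min_gr_iff) auto
  have msep: "\<And>u v. u \<in> S \<Longrightarrow> v \<in> S \<Longrightarrow> u \<noteq> v \<Longrightarrow> m \<le> dist u v"
  proof -
    fix u v assume uv: "u \<in> S" "v \<in> S" "u \<noteq> v"
    have "m \<le> r u" unfolding m_def using fin uv(1) by simp
    also have "r u \<le> dist u v" using r[OF uv(1)] uv by auto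
    finally show "m \<le> dist u v" .
  qed
  have "\<forall>z\<in>S. \<exists>\<delta>. \<delta> > 0 \<and> (\<forall>a' b'. dist (a',b') (a,b) < \<delta> \<longrightarrow>
           (\<exists>w. dist w z < m/2 \<and> w \<in> pos_quadrant \<and> H_sys a' b' d w = 0 \<and> Dt d a' b' (fst w) (snd w) \<noteq> 0))"
  proof
    fix z assume zS: "z \<in> S"
    obtain \<rho> where rho: "\<rho> > 0" "ball z \<rho> \<subseteq> pos_quadrant"
      using open_quadrant Sq zS open_contains_ball by blast
    obtain x y where zxy: "z = (x,y)" by fastforce
    have e0: "min (m/2) \<rho> > 0" using m0 rho by simp
    obtain \<delta> where dl: "\<delta> > 0" "\<forall>a' b'. dist (a',b') (a,b) < \<delta> \<longrightarrow>
           (\<exists>w. dist w (x,y) < min (m/2) \<rho> \<and> H_sys a' b' d w = 0 \<and> Dt d a' b' (fst w) (snd w) \<noteq> 0)"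
      using local_persist[of a b d x y, OF _ _ e0] Sr[OF zS] zxy by auto
    show "\<exists>\<delta>. \<delta> > 0 \<and> (\<forall>a' b'. dist (a',b') (a,b) < \<delta> \<longrightarrow>
           (\<exists>w. dist w z < m/2 \<and> w \<in> pos_quadrant \<and> H_sys a' b' d w = 0 \<and> Dt d a' b' (fst w) (snd w) \<noteq> 0))"
    proof (intro exI[of _ \<delta>] conjI allI impI)
      show "\<delta> > 0" by fact
      fix a' b' assume "dist (a',b') (a,b) < \<delta>"
      then obtain w where w: "dist w (x,y) < min (m/2) \<rho>" "H_sys a' b' d w = 0" "Dt d a' b' (fst w) (snd w) \<noteq> 0"
        using dl(2) by blast
      have "w \<in> ball z \<rho>" using w(1) zxy by (simp add: dist_commute)
      then have "w \<in> pos_quadrant" using rho(2) by blast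
      then show "\<exists>w. dist w z < m/2 \<and> w \<in> pos_quadrant \<and> H_sys a' b' d w = 0 \<and> Dt d a' b' (fst w) (snd w) \<noteq> 0"
        using w zxy \<open>w \<in> pos_quadrant\<close> by (intro exI[of _ w]) simp
    qed
  qed
  then obtain dz where dz: "\<And>z. z \<in> S \<Longrightarrow> dz z > 0 \<and> (\<forall>a' b'. dist (a',b') (a,b) < dz z \<longrightarrow>
           (\<exists>w. dist w z < m/2 \<and> w \<in> pos_quadrant \<and> H_sys a' b' d w = 0 \<and> Dt d a' b' (fst w) (snd w) \<noteq> 0))"
    using bchoice[of S] by metis
  define \<delta> where "\<delta> = Min (dz ` S)"
  have d0: "\<delta> > 0" unfolding \<delta>_def using fin Sne dz by (subst Min_gr_iff) auto
  show "\<exists>e>0. ball p e \<subseteq> E_set d"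
  proof (intro exI[of _ \<delta>] conjI d0 subsetI)
    fix p' assume "p' \<in> ball p \<delta>"
    obtain a' b' where pab': "p' = (a',b')" by fastforce
    have close: "dist (a',b') (a,b) < \<delta>" using \<open>p' \<in> ball p \<delta>\<close> pab pab' by (simp add: dist_commute)
    have "\<forall>z\<in>S. \<exists>w. dist w z < m/2 \<and> w \<in> pos_quadrant \<and> H_sys a' b' d w = 0 \<and> Dt d a' b' (fst w) (snd w) \<noteq> 0"
    proof
      fix z assume zS: "z \<in> S"
      have "\<delta> \<le> dz z" unfolding \<delta>_def using fin zS by simp
      then show "\<exists>w. dist w z < m/2 \<and> w \<in> pos_quadrant \<and> H_sys a' b' d w = 0 \<and> Dt d a' b' (fst w) (snd w) \<noteq> 0"
        using dz[OF zS] close by auto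
    qed
    then obtain f where f: "\<And>z. z \<in> S \<Longrightarrow> dist (f z) z < m/2 \<and> f z \<in> pos_quadrant \<and> H_sys a' b' d (f z) = 0 \<and> Dt d a' b' (fst (f z)) (snd (f z)) \<noteq> 0"
      using bchoice[of S] by metis
    have inj: "inj_on f S"
    proof (rule inj_onI)
      fix u v assume uv: "u \<in> S" "v \<in> S" "f u = f v"
      show "u = v"
      proof (rule ccontr)
        assume "u \<noteq> v"
        then have "m \<le> dist u v" using msep uv by blast
        moreover have "dist u v \<le> dist (f u) u + dist (f v) v"
          using dist_triangle3[of u v "f u"] uv(3) by (simp add: dist_commute)
        moreover have "dist (f u) u < m/2" using f[OF uv(1)] by blast
        moreover have "dist (f v) v < m/2" using f[OF uv(2)] by blast
        ultimately show False by linarith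
      qed
    qed
    have "Pgood d a' b' (f ` S)"
      unfolding Pgood_def using fin c5 card_image[OF inj] f by auto
    then show "p' \<in> E_set d" using pab' E_iff by blast
  qed
qed

theorem proposition1p4:
  fixes d :: nat
  shows "open (E_set d) \<and> (\<forall>a b. (a, b) \<in> E_set d \<longleftrightarrow> (b, a) \<in> E_set d)"
  using E_open sym_one by blast

end
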